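(* Let $\lambda$ be a partition and let $k\geq 3$ be an integer. If $1\leq \ell(\lambda)\leq k-2$ and $\lambda\neq (1),(2),(1,1)$, then \[ \frac{s_\lambda(1^k)}{k}\geq \frac{s_\lambda(1^{k-1})}{k-1}+1. \]
   Context: $s_\lambda$ is the Schur polynomial of $\lambda$, and $s_\lambda(1^m)$ denotes its evaluation at $(1,\dots,1)$ with $m$ ones; equivalently, $s_\lambda(1^m)$ is the number of semistandard Young tableaux of shape $\lambda$ with entries in $\{1,\dots,m\}$ (rows weakly increasing left to right, columns strictly increasing top to bottom). $\ell(\lambda)$ is the number of nonzero parts of $\lambda$. *)

theory Defs
  imports Complex_Main
begin

definition is_partition :: "nat list \<Rightarrow> bool" where
  "is_partition lam \<longleftrightarrow> sorted_wrt (\<ge>) lam \<and> (\<forall>x\<in>set lam. 0 < x)"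

definition part_length :: "nat list \<Rightarrow> nat" where
  "part_length lam = length (filter (\<lambda>x. 0 < x) lam)"

text \<open>Young diagram (0-indexed cells (row, column)).\<close>
definition young_diagram :: "nat list \<Rightarrow> (nat \<times> nat) set" where
  "young_diagram lam = {(i, j). i < length lam \<and> j < lam ! i}"

definition ssyt :: "nat list \<Rightarrow> nat \<Rightarrow> ((nat \<times> nat) \<Rightarrow> nat) set" where
  "ssyt lam m = {T.
      (\<forall>c\<in>young_diagram lam. T c \<in> {1..m}) \<and>
      (\<forall>c. c \<notin> young_diagram lam \<longrightarrow> T c = 0) \<and>
      (\<forall>i j. (i, Suc j) \<in> young_diagram lam \<longrightarrow> T (i, j) \<le> T (i, Suc j)) \<and>
      (\<forall>i j. (Suc i, j) \<in> young_diagram lam \<longrightarrow> T (i, j) < T (Suc i, j))}"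

text \<open>s_lam(1^m) = number of SSYT of shape lam with entries in {1..m}.\<close>
definition schur_ones :: "nat list \<Rightarrow> nat \<Rightarrow> nat" where
  "schur_ones lam m = card (ssyt lam m)"

end

theory Submission
  imports Defs "HOL-Library.FuncSet"
begin

definition shp :: "nat list \<Rightarrow> ((nat \<times> nat) \<Rightarrow> nat) \<Rightarrow> bool" where
 "shp lam T \<longleftrightarrow> (\<forall>c. c \<notin> young_diagram lam \<longrightarrow> T c = 0) \<and>
      (\<forall>i j. (i, Suc j) \<in> young_diagram lam \<longrightarrow> T (i, j) \<le> T (i, Suc j)) \<and>
      (\<forall>i j. (Suc i, j) \<in> young_diagram lam \<longrightarrow> T (i, j) < T (Suc i, j))"

definition ssS :: "nat list \<Rightarrow> nat set \<Rightarrow> ((nat \<times> nat) \<Rightarrow> nat) set" where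
  "ssS lam S = {T. shp lam T \<and> T ` young_diagram lam = S}"

lemma ssyt_alt: "ssyt lam m = {T. shp lam T \<and> T ` young_diagram lam \<subseteq> {1..m}}"
  unfolding ssyt_def shp_def by auto

lemma finite_yd: "finite (young_diagram lam)"
proof -
  have "young_diagram lam = Sigma {..<length lam} (\<lambda>i. {..<lam!i})"
    unfolding young_diagram_def by auto
  thus ?thesis by simp
qed

lemma finite_ssyt: "finite (ssyt lam m)"
proof -
  let ?D = "young_diagram lam"
  have inj: "inj_on (\<lambda>T. restrict T ?D) (ssyt lam m)"
  proof (rule inj_onI)
    fix S T assume S: "S \<in> ssyt lam m" and T: "T \<in> ssyt lam m"
      and eq: "restrict S ?D = restrict T ?D"
    show "S = T"
    proof
      fix c show "S c = T c"
      proof (cases "c \<in> ?D")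
        case True then show ?thesis using fun_cong[OF eq, of c] by simp
      next
        case False then show ?thesis using S T unfolding ssyt_def by (cases c) auto
      qed
    qed
  qed
  have "(\<lambda>T. restrict T ?D) ` ssyt lam m \<subseteq> PiE ?D (\<lambda>_. {1..m})"
    unfolding ssyt_def by auto
  moreover have "finite (PiE ?D (\<lambda>_. {1..m}))" by (intro finite_PiE finite_yd) auto
  ultimately show ?thesis using inj finite_imageD finite_subset by metis
qed

lemma card_ssyt_sum: "card (ssyt lam m) = (\<Sum>S\<in>Pow {1..m}. card (ssS lam S))"
proof -
  have U: "ssyt lam m = (\<Union>S\<in>Pow {1..m}. ssS lam S)"
    unfolding ssyt_alt ssS_def by auto
  have "card (\<Union>S\<in>Pow {1..m}. ssS lam S) = (\<Sum>S\<in>Pow {1..m}. card (ssS lam S))"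
  proof (rule card_UN_disjoint)
    show "finite (Pow {1..m::nat})" by simp
    show "\<forall>S\<in>Pow {1..m}. finite (ssS lam S)"
    proof
      fix S assume "S \<in> Pow {1..m}"
      hence "ssS lam S \<subseteq> ssyt lam m" unfolding ssyt_alt ssS_def by auto
      thus "finite (ssS lam S)" using finite_ssyt finite_subset by blast
    qed
    show "\<forall>S\<in>Pow {1..m}. \<forall>S'\<in>Pow {1..m}. S \<noteq> S' \<longrightarrow> ssS lam S \<inter> ssS lam S' = {}"
      unfolding ssS_def by auto
  qed
  thus ?thesis using U by simp
qed

lemma exists_iso:
  fixes S :: "nat set"
  assumes "finite S" "0 \<notin> S"
  shows "\<exists>g. g ` {0..card S} = insert 0 S \<and> g 0 = 0 \<and>
        (\<forall>x\<in>{0..card S}. \<forall>y\<in>{0..card S}. g x \<le> g y \<longleftrightarrow> x \<le> y)"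
proof -
  define xs where "xs = sorted_list_of_set (insert 0 S)"
  have len: "length xs = Suc (card S)" using assms by (simp add: xs_def)
  have st: "sorted_wrt (<) xs" unfolding xs_def by (rule strict_sorted_list_of_set)
  have setxs: "set xs = insert 0 S" using assms unfolding xs_def by (metis finite_insert sorted_list_of_set.set_sorted_key_list_of_set)
  have lt: "xs!x < xs!y" if "x < y" "y < length xs" for x y
    using sorted_wrt_nth_less[OF st that] .
  have iso: "xs!x \<le> xs!y \<longleftrightarrow> x \<le> y" if "x < length xs" "y < length xs" for x y
    using lt that by (metis leD le_less linorder_neqE_nat)
  have img: "(!) xs ` {0..card S} = insert 0 S"
  proof -
    have "{0..card S} = {..<length xs}" using len by auto
    moreover have "(!) xs ` {..<length xs} = set xs" by (auto simp: in_set_conv_nth)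
    ultimately show ?thesis using setxs by simp 
  qed
  have g0: "xs!0 = 0"
  proof -
    obtain i where i: "i < length xs" "xs!i = 0" using setxs by (metis in_set_conv_nth insertI1)
    show ?thesis
    proof (cases "i = 0")
      case False thus ?thesis using lt[of 0 i] i by simp
    qed (use i in simp)
  qed
  show ?thesis
    by (rule exI[of _ "(!) xs"]) (use img g0 iso len in auto)
qed

lemma shp_comp:
  assumes iso: "\<forall>x\<in>A. \<forall>y\<in>A. g x \<le> g y \<longleftrightarrow> x \<le> y" and g0: "g 0 = 0" and A0: "0 \<in> A"
    and TA: "\<And>c. T c \<in> A"
  shows "shp lam (g \<circ> T) \<longleftrightarrow> shp lam T"
proof -
  have le: "\<And>c d. g (T c) \<le> g (T d) \<longleftrightarrow> T c \<le> T d" using iso TA by auto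
  have lt: "\<And>c d. g (T c) < g (T d) \<longleftrightarrow> T c < T d" using le by (meson not_le)
  have z: "\<And>c. g (T c) = 0 \<longleftrightarrow> T c = 0"
  proof -
    fix c
    have "g (T c) \<le> g 0 \<longleftrightarrow> T c \<le> 0" "g 0 \<le> g (T c) \<longleftrightarrow> 0 \<le> T c"
      using iso TA A0 by auto
    thus "g (T c) = 0 \<longleftrightarrow> T c = 0" using g0 by auto
  qed
  show ?thesis unfolding shp_def using le lt z by simp
qed

lemma ssS_range: "T \<in> ssS lam S \<Longrightarrow> T c \<in> insert 0 S"
  unfolding ssS_def shp_def by (cases "c \<in> young_diagram lam"; cases c) auto

lemma card_ssS:
  assumes "finite S" "0 \<notin> S"
  shows "card (ssS lam S) = card (ssS lam {1..card S})"
proof -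
  let ?A = "{0..card S}" let ?n = "card S"
  obtain g where gim: "g ` ?A = insert 0 S" and g0: "g 0 = 0"
    and iso: "\<forall>x\<in>?A. \<forall>y\<in>?A. g x \<le> g y \<longleftrightarrow> x \<le> y"
    using exists_iso[OF assms] by blast
  have inj: "inj_on g ?A" using iso by (intro inj_onI) (metis order_antisym order_refl)
  define h where "h = the_inv_into ?A g"
  have hg: "\<And>x. x \<in> ?A \<Longrightarrow> h (g x) = x" using inj by (simp add: h_def the_inv_into_f_f)
  have gh: "\<And>y. y \<in> insert 0 S \<Longrightarrow> g (h y) = y" using gim inj
    by (metis h_def f_the_inv_into_f)
  have hA: "\<And>y. y \<in> insert 0 S \<Longrightarrow> h y \<in> ?A" using gim inj
    by (metis h_def the_inv_into_into order_refl)
  have h0: "h 0 = 0" using hg[of 0] g0 by simp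
  have isoh: "\<forall>x\<in>insert 0 S. \<forall>y\<in>insert 0 S. h x \<le> h y \<longleftrightarrow> x \<le> y"
    using iso gh hA by metis
  have gS: "g ` {1..?n} = S"
  proof -
    have "{1..?n} = ?A - {0}" by auto
    hence "g ` {1..?n} = g ` (?A - {0})" by simp
    also have "\<dots> = g ` ?A - g ` {0}" using inj by (intro inj_on_image_set_diff) auto
    also have "\<dots> = S" using gim g0 assms(2) by auto
    finally show ?thesis .
  qed
  have hS: "h ` S = {1..?n}"
  proof -
    have "h ` S = h ` g ` {1..?n}" using gS by simp
    also have "\<dots> = {1..?n}" using hg by (force simp: image_iff)
    finally show ?thesis .
  qed
  have "bij_betw (\<lambda>T. g \<circ> T) (ssS lam {1..?n}) (ssS lam S)"
  proof (rule bij_betw_byWitness[where f'="\<lambda>T. h \<circ> T"])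
    show "\<forall>T\<in>ssS lam {1..?n}. h \<circ> (g \<circ> T) = T"
    proof
      fix T assume T: "T \<in> ssS lam {1..?n}"
      show "h \<circ> (g \<circ> T) = T"
      proof
        fix c have "T c \<in> insert 0 {1..?n}" by (rule ssS_range[OF T])
        hence "T c \<in> ?A" by auto
        thus "(h \<circ> (g \<circ> T)) c = T c" using hg by simp
      qed
    qed
    show "\<forall>T\<in>ssS lam S. g \<circ> (h \<circ> T) = T"
    proof
      fix T assume T: "T \<in> ssS lam S"
      show "g \<circ> (h \<circ> T) = T"
      proof
        fix c show "(g \<circ> (h \<circ> T)) c = T c" using gh ssS_range[OF T, of c] by simp
      qed
    qed
    show "(\<lambda>T. g \<circ> T) ` ssS lam {1..?n} \<subseteq> ssS lam S"
    proof
      fix T' assume "T' \<in> (\<lambda>T. g \<circ> T) ` ssS lam {1..?n}"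
      then obtain T where T: "T \<in> ssS lam {1..?n}" and T': "T' = g \<circ> T" by auto
      have TA: "\<And>c. T c \<in> ?A"
      proof -
        fix c have "T c \<in> insert 0 {1..?n}" by (rule ssS_range[OF T])
        thus "T c \<in> ?A" by auto
      qed
      have "shp lam T" using T unfolding ssS_def by auto
      hence "shp lam (g \<circ> T)" using shp_comp[OF iso g0 _ TA] by simp
      moreover have "(g \<circ> T) ` young_diagram lam = S"
      proof -
        have "T ` young_diagram lam = {1..?n}" using T unfolding ssS_def by simp
        moreover have "(g \<circ> T) ` young_diagram lam = g ` (T ` young_diagram lam)" by (rule image_comp[symmetric])
        ultimately show ?thesis using gS by simp
      qed
      ultimately show "T' \<in> ssS lam S" unfolding ssS_def T' by simp
    qed
    show "(\<lambda>T. h \<circ> T) ` ssS lam S \<subseteq> ssS lam {1..?n}"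
    proof
      fix T' assume "T' \<in> (\<lambda>T. h \<circ> T) ` ssS lam S"
      then obtain T where T: "T \<in> ssS lam S" and T': "T' = h \<circ> T" by auto
      have TA: "\<And>c. T c \<in> insert 0 S" using ssS_range[OF T] by auto
      have "shp lam T" using T unfolding ssS_def by auto
      hence "shp lam (h \<circ> T)" using shp_comp[OF isoh h0 _ TA] by simp
      moreover have "(h \<circ> T) ` young_diagram lam = {1..?n}"
      proof -
        have "T ` young_diagram lam = S" using T unfolding ssS_def by simp
        moreover have "(h \<circ> T) ` young_diagram lam = h ` (T ` young_diagram lam)" by (rule image_comp[symmetric])
        ultimately show ?thesis using hS by simp
      qed
      ultimately show "T' \<in> ssS lam {1..?n}" unfolding ssS_def T' by simp
    qed
  qed
  thus ?thesis by (metis bij_betw_same_card)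
qed

lemma sum_Pow_card:
  fixes f :: "nat \<Rightarrow> nat"
  shows "(\<Sum>S\<in>Pow {1..m::nat}. f (card S)) = (\<Sum>j\<le>m. (m choose j) * f j)"
proof -
  have P: "Pow {1..m} = (\<Union>j\<le>m. {S. S \<subseteq> {1..m} \<and> card S = j})"
  proof (rule set_eqI, rule iffI)
    fix S assume "S \<in> Pow {1..m}"
    hence "card S \<le> m" using card_mono[of "{1..m}" S] by auto
    thus "S \<in> (\<Union>j\<le>m. {S. S \<subseteq> {1..m} \<and> card S = j})" using \<open>S \<in> Pow {1..m}\<close> by auto
  qed auto
  have "(\<Sum>S\<in>Pow {1..m}. f (card S)) = (\<Sum>j\<le>m. \<Sum>S\<in>{S. S \<subseteq> {1..m} \<and> card S = j}. f (card S))"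
    unfolding P by (rule sum.UNION_disjoint) auto
  also have "\<dots> = (\<Sum>j\<le>m. (m choose j) * f j)"
  proof (rule sum.cong)
    fix j assume "j \<in> {..m}"
    have "(\<Sum>S\<in>{S. S \<subseteq> {1..m} \<and> card S = j}. f (card S)) = (\<Sum>S\<in>{S. S \<subseteq> {1..m} \<and> card S = j}. f j)"
      by (rule sum.cong) auto
    also have "\<dots> = (m choose j) * f j" using n_subsets[of "{1..m}" j] by simp
    finally show "(\<Sum>S\<in>{S. S \<subseteq> {1..m} \<and> card S = j}. f (card S)) = (m choose j) * f j" .
  qed simp
  finally show ?thesis .
qed

lemma schur_sum: "schur_ones lam m = (\<Sum>j\<le>m. (m choose j) * card (ssS lam {1..j}))"
proof -
  have "schur_ones lam m = (\<Sum>S\<in>Pow {1..m}. card (ssS lam S))"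
    unfolding schur_ones_def by (rule card_ssyt_sum)
  also have "\<dots> = (\<Sum>S\<in>Pow {1..m}. card (ssS lam {1..card S}))"
  proof (rule sum.cong)
    fix S assume "S \<in> Pow {1..m}"
    hence "finite S" "0 \<notin> S" using finite_subset by auto
    thus "card (ssS lam S) = card (ssS lam {1..card S})" by (rule card_ssS)
  qed simp
  also have "\<dots> = (\<Sum>j\<le>m. (m choose j) * card (ssS lam {1..j}))"
    by (rule sum_Pow_card)
  finally show ?thesis .
qed


definition dd :: "nat \<Rightarrow> nat \<Rightarrow> real" where
  "dd k j = real (k choose j) / real k - real ((k-1) choose j) / real (k-1)"

lemma alg_aux:
  fixes N R a b c d f :: real
  assumes "N > 1" "R > 0" "N * b = a * R" "(N - 1) * d = c * R" "b = f + d"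
  shows "a / N - c / (N - 1) = f / R"
proof -
  have "a / N = b / R" using assms by (simp add: field_simps)
  moreover have "c / (N - 1) = d / R" using assms by (simp add: field_simps)
  moreover have "b / R - d / R = f / R" using assms by (simp add: diff_divide_distrib[symmetric])
  ultimately show ?thesis by simp
qed

lemma dd_ge2:
  assumes "k \<ge> 3" "j \<ge> 2"
  shows "dd k j = real ((k-2) choose (j-2)) / real j"
proof -
  obtain n where n: "k = n + 2" using assms by (intro that[of "k-2"]) simp
  obtain r where r: "j = r + 2" using assms by (intro that[of "j-2"]) simp
  have n1: "(n+2) * (n+1 choose (r+1)) = (n+2 choose (r+2)) * (r+2)"
    using Suc_times_binomial_eq[of "n+1" "r+1"] by (simp add: numeral_2_eq_2)
  have n2: "(n+1) * (n choose (r+1)) = (n+1 choose (r+2)) * (r+2)"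
    using Suc_times_binomial_eq[of "n" "r+1"] by (simp add: numeral_2_eq_2)
  have n3: "(n+1 choose (r+1)) = (n choose r) + (n choose (r+1))"
    by simp
  have "real (n+2 choose (r+2)) / real (n+2) - real (n+1 choose (r+2)) / (real (n+2) - 1)
        = real (n choose r) / real (r+2)"
  proof (rule alg_aux[where b="real (n+1 choose (r+1))" and d="real (n choose (r+1))"])
    show "real (n+2) * real (n+1 choose (r+1)) = real (n+2 choose (r+2)) * real (r+2)"
      using arg_cong[OF n1, of real] by (simp only: of_nat_mult)
    have "real (n+2) - 1 = real (n+1)" by simp
    thus "(real (n+2) - 1) * real (n choose (r+1)) = real (n+1 choose (r+2)) * real (r+2)"
      using arg_cong[OF n2, of real] by (simp only: of_nat_mult)
    show "real (n+1 choose (r+1)) = real (n choose r) + real (n choose (r+1))"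
      using arg_cong[OF n3, of real] by (simp only: of_nat_add)
  qed simp_all
  moreover have "real (k-1) = real (n+2) - 1" using n by simp
  moreover have "k - 1 = n + 1" using n by simp
  ultimately show ?thesis unfolding dd_def using n r by simp
qed

lemma dd_1: "k \<ge> 3 \<Longrightarrow> dd k 1 = 0"
  unfolding dd_def by simp

lemma dd_nonneg: "k \<ge> 3 \<Longrightarrow> j \<ge> 1 \<Longrightarrow> dd k j \<ge> 0"
proof (cases "j = 1")
  case True
  assume "k \<ge> 3" thus ?thesis using True dd_1 by simp
next
  case False
  assume "k \<ge> 3" "j \<ge> 1" thus ?thesis using False dd_ge2[of k j] by simp
qed

lemma key_sum:
  fixes e :: "nat \<Rightarrow> nat"
  assumes "k \<ge> 3"
  shows "real (\<Sum>j\<le>k. (k choose j) * e j) / real k - real (\<Sum>j\<le>k-1. ((k-1) choose j) * e j) / real (k-1)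
     = (\<Sum>j\<le>k. real (e j) * dd k j)"
proof -
  have "(\<Sum>j\<le>k-1. ((k-1) choose j) * e j) = (\<Sum>j\<le>k. ((k-1) choose j) * e j)"
  proof -
    have "k = Suc (k-1)" using assms by simp
    hence "(\<Sum>j\<le>k. ((k-1) choose j) * e j) = (\<Sum>j\<le>Suc (k-1). ((k-1) choose j) * e j)" by simp
    also have "\<dots> = (\<Sum>j\<le>k-1. ((k-1) choose j) * e j)" by simp
    finally show ?thesis by simp
  qed
  hence "real (\<Sum>j\<le>k. (k choose j) * e j) / real k - real (\<Sum>j\<le>k-1. ((k-1) choose j) * e j) / real (k-1)
     = (\<Sum>j\<le>k. real (k choose j) * e j / real k) - (\<Sum>j\<le>k. real ((k-1) choose j) * e j / real (k-1))"
    by (simp add: sum_divide_distrib)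
  also have "\<dots> = (\<Sum>j\<le>k. real (e j) * dd k j)"
    unfolding dd_def sum_subtractf[symmetric] by (rule sum.cong) (simp_all add: field_simps)
  finally show ?thesis .
qed

lemma choose_ge_n:
  assumes "1 \<le> r" "r < n"
  shows "n \<le> n choose r"
proof (cases "2 * r \<le> n")
  case True
  then have "n choose 1 \<le> n choose r" using assms by (intro binomial_mono) auto
  thus ?thesis by simp
next
  case False
  then have "n choose (n-1) \<le> n choose r" using assms by (intro binomial_antimono) auto
  moreover have "n choose (n-1) = n" using assms
    using binomial_symmetric[of 1 n] by simp
  ultimately show ?thesis by simp
qed

lemma bound:
  fixes e :: "nat \<Rightarrow> nat"
  assumes k: "k \<ge> 3" and e0: "e 0 = 0"
    and cases: "e 2 \<ge> 2 \<or> (e 2 \<ge> 1 \<and> e 3 \<ge> 1 \<and> k \<ge> 4) \<or> (\<exists>l. 3 \<le> l \<and> l \<le> k - 2 \<and> e l \<ge> 1)"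
  shows "(\<Sum>j\<le>k. real (e j) * dd k j) \<ge> 1"
proof -
  have nn: "\<And>j. 0 \<le> real (e j) * dd k j"
    by (case_tac "j = 0") (simp_all add: e0 dd_nonneg k)
  have sub: "\<And>J. J \<subseteq> {..k} \<Longrightarrow> (\<Sum>j\<in>J. real (e j) * dd k j) \<le> (\<Sum>j\<le>k. real (e j) * dd k j)"
    by (rule sum_mono2) (simp_all add: nn)
  have d2: "dd k 2 = 1/2" using dd_ge2[OF k, of 2] by simp
  from cases show ?thesis
  proof (elim disjE conjE exE)
    assume "e 2 \<ge> 2"
    hence "real (e 2) \<ge> 2" by simp
    moreover have "real (e 2) * dd k 2 = real (e 2) / 2" unfolding d2 by simp
    ultimately have "1 \<le> real (e 2) * dd k 2" by linarith
    also have "\<dots> \<le> (\<Sum>j\<le>k. real (e j) * dd k j)" using sub[of "{2}"] k by simp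
    finally show ?thesis .
  next
    assume a: "e 2 \<ge> 1" "e 3 \<ge> 1" "k \<ge> 4"
    have d3: "dd k 3 = real (k-2) / 3" using dd_ge2[OF k, of 3] by simp
    have "real (k-2) \<ge> 2" using a by simp
    hence "1 \<le> real (e 2) * dd k 2 + real (e 3) * dd k 3"
      proof -
      have "real (e 2) \<ge> 1" using a by simp
      hence "real (e 2) * dd k 2 \<ge> 1/2" unfolding d2 by simp
      moreover have "real (e 3) * dd k 3 \<ge> 1 * (2/3)" using a d3 \<open>real (k-2) \<ge> 2\<close>
        by (intro mult_mono) simp_all
      ultimately show ?thesis by simp
    qed
    also have "\<dots> = (\<Sum>j\<in>{2,3}. real (e j) * dd k j)" by simp
    also have "\<dots> \<le> (\<Sum>j\<le>k. real (e j) * dd k j)" using sub[of "{2,3}"] a by simp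
    finally show ?thesis .
  next
    fix l assume a: "3 \<le> l" "l \<le> k - 2" "e l \<ge> 1"
    have dl: "dd k l = real ((k-2) choose (l-2)) / real l" using dd_ge2[OF k, of l] a by simp
    have "k - 2 \<le> (k-2) choose (l-2)" using a by (intro choose_ge_n) auto
    hence "real l \<le> real ((k-2) choose (l-2))" using a by simp
    hence "1 \<le> dd k l" using dl a by simp
    hence "1 \<le> real (e l) * dd k l" using a
      using mult_mono[of 1 "real (e l)" 1 "dd k l"] by simp
    also have "\<dots> \<le> (\<Sum>j\<le>k. real (e j) * dd k j)" using sub[of "{l}"] a by simp
    finally show ?thesis .
  qed
qed


lemma fin_ssS: "finite (ssS lam {1..j})"
proof -
  have "ssS lam {1..j} \<subseteq> ssyt lam j" unfolding ssyt_alt ssS_def by auto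
  thus ?thesis using finite_ssyt finite_subset by blast
qed

lemma yd1: "young_diagram [a] = {(i,j). i = 0 \<and> j < a}"
  unfolding young_diagram_def by auto

lemma yd2: "young_diagram [a,b] = {(i,j). (i = 0 \<and> j < a) \<or> (i = 1 \<and> j < b)}"
  unfolding young_diagram_def by (auto simp: less_Suc_eq nth_Cons')

lemma R_mem:
  assumes "is_partition lam"
  shows "(\<lambda>c. if c \<in> young_diagram lam then fst c + 1 else 0) \<in> ssS lam {1..length lam}"
proof -
  let ?D = "young_diagram lam"
  let ?R = "\<lambda>c. if c \<in> young_diagram lam then fst c + 1 else 0"
  have srt: "sorted_wrt (\<ge>) lam" and pos: "\<forall>x\<in>set lam. 0 < x"
    using assms unfolding is_partition_def by auto
  have rowD: "(i, j) \<in> ?D" if "(i, Suc j) \<in> ?D" for i j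
    using that unfolding young_diagram_def by auto
  have colD: "(i, j) \<in> ?D" if "(Suc i, j) \<in> ?D" for i j
  proof -
    have "Suc i < length lam" "j < lam ! Suc i" using that unfolding young_diagram_def by auto
    moreover have "lam ! Suc i \<le> lam ! i" using sorted_wrt_nth_less[OF srt, of i "Suc i"] calculation by simp
    ultimately show ?thesis unfolding young_diagram_def by auto
  qed
  have shp: "shp lam ?R"
    unfolding shp_def
  proof (intro conjI allI impI)
    fix c assume "c \<notin> ?D" thus "?R c = 0" by simp
  next
    fix i j assume h: "(i, Suc j) \<in> ?D"
    with rowD[OF h] show "?R (i, j) \<le> ?R (i, Suc j)" by simp
  next
    fix i j assume h: "(Suc i, j) \<in> ?D"
    with colD[OF h] show "?R (i, j) < ?R (Suc i, j)" by simp
  qed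
  have img: "?R ` ?D = {1..length lam}"
  proof (rule set_eqI, rule iffI)
    fix v assume "v \<in> ?R ` ?D"
    then obtain i j where ij: "(i,j) \<in> ?D" "v = ?R (i,j)" by auto
    hence "i < length lam" unfolding young_diagram_def by simp
    thus "v \<in> {1..length lam}" using ij by simp
  next
    fix v assume v: "v \<in> {1..length lam}"
    have "lam ! (v-1) \<in> set lam" using v by auto
    hence "(v-1, 0) \<in> ?D" using pos v unfolding young_diagram_def by auto
    moreover have "?R (v-1, 0) = v" using calculation v by simp
    ultimately show "v \<in> ?R ` ?D" by (intro image_eqI[of _ _ "(v-1,0)"]) simp_all
  qed
  show ?thesis unfolding ssS_def using shp img by simp
qed

lemma card_ge1: "T \<in> ssS lam {1..j} \<Longrightarrow> 1 \<le> card (ssS lam {1..j})"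
  using fin_ssS by (metis card_0_eq empty_iff less_one not_le)

lemma card_ge2: "T \<in> ssS lam {1..j} \<Longrightarrow> T' \<in> ssS lam {1..j} \<Longrightarrow> T \<noteq> T' \<Longrightarrow> 2 \<le> card (ssS lam {1..j})"
proof -
  assume a: "T \<in> ssS lam {1..j}" "T' \<in> ssS lam {1..j}" "T \<noteq> T'"
  hence "card {T, T'} \<le> card (ssS lam {1..j})" using fin_ssS by (intro card_mono) auto
  thus ?thesis using a by simp
qed

lemma one_row:
  assumes "a \<ge> 3"
  shows "2 \<le> card (ssS [a] {1..2})"
proof -
  define T1 where "T1 = (\<lambda>(i::nat,j). if i = 0 \<and> j < a then (if j = a - 1 then 2 else 1) else (0::nat))"
  define T2 where "T2 = (\<lambda>(i::nat,j). if i = 0 \<and> j < a then (if j \<ge> a - 2 then 2 else 1) else (0::nat))"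
  have two: "{1..2::nat} = {1,2}" by auto
  have "T1 \<in> ssS [a] {1..2}"
  proof -
    have "shp [a] T1" unfolding shp_def yd1 T1_def by auto
    moreover have "T1 ` young_diagram [a] \<subseteq> {1,2}" unfolding yd1 T1_def by (auto split: if_splits)
    moreover have "1 \<in> T1 ` young_diagram [a]" using assms
      by (intro image_eqI[of _ _ "(0,0)"]) (auto simp: yd1 T1_def)
    moreover have "2 \<in> T1 ` young_diagram [a]" using assms
      by (intro image_eqI[of _ _ "(0,a-1)"]) (auto simp: yd1 T1_def)
    ultimately show ?thesis unfolding ssS_def two by auto
  qed
  moreover have "T2 \<in> ssS [a] {1..2}"
  proof -
    have "shp [a] T2" unfolding shp_def yd1 T2_def by auto
    moreover have "T2 ` young_diagram [a] \<subseteq> {1,2}" unfolding yd1 T2_def by (auto split: if_splits)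
    moreover have "1 \<in> T2 ` young_diagram [a]" using assms
      by (intro image_eqI[of _ _ "(0,0)"]) (auto simp: yd1 T2_def)
    moreover have "2 \<in> T2 ` young_diagram [a]" using assms
      by (intro image_eqI[of _ _ "(0,a-1)"]) (auto simp: yd1 T2_def)
    ultimately show ?thesis unfolding ssS_def two by auto
  qed
  moreover have "T1 \<noteq> T2"
  proof
    assume "T1 = T2"
    hence "T1 (0, a-2) = T2 (0, a-2)" by simp
    moreover have "a - 2 \<noteq> a - 1" "a - 2 < a" using assms by auto
    ultimately show False unfolding T1_def T2_def by simp
  qed
  ultimately show ?thesis by (rule card_ge2)
qed

lemma two_rows_gt:
  assumes "b \<ge> 1" "a > b"
  shows "2 \<le> card (ssS [a,b] {1..2})"
proof -
  define T1 where "T1 = (\<lambda>(i::nat,j). if (i = 0 \<and> j < a) \<or> (i = 1 \<and> j < b) then i + 1 else (0::nat))"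
  define T2 where "T2 = (\<lambda>(i::nat,j). if (i = 0 \<and> j < a) \<or> (i = 1 \<and> j < b) then (if i = 0 \<and> j = a - 1 then 2 else i + 1) else (0::nat))"
  have two: "{1..2::nat} = {1,2}" by auto
  have "T1 \<in> ssS [a,b] {1..2}"
  proof -
    have "shp [a,b] T1" unfolding shp_def yd2 T1_def by auto
    moreover have "T1 ` young_diagram [a,b] \<subseteq> {1,2}" unfolding yd2 T1_def by (auto split: if_splits)
    moreover have "1 \<in> T1 ` young_diagram [a,b]" using assms
      by (intro image_eqI[of _ _ "(0,0)"]) (auto simp: yd2 T1_def)
    moreover have "2 \<in> T1 ` young_diagram [a,b]" using assms
      by (intro image_eqI[of _ _ "(1,0)"]) (auto simp: yd2 T1_def)
    ultimately show ?thesis unfolding ssS_def two by auto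
  qed
  moreover have "T2 \<in> ssS [a,b] {1..2}"
  proof -
    have "shp [a,b] T2" using assms unfolding shp_def yd2 T2_def by auto
    moreover have "T2 ` young_diagram [a,b] \<subseteq> {1,2}" unfolding yd2 T2_def by (auto split: if_splits)
    moreover have "1 \<in> T2 ` young_diagram [a,b]" using assms
      by (intro image_eqI[of _ _ "(0,0)"]) (auto simp: yd2 T2_def)
    moreover have "2 \<in> T2 ` young_diagram [a,b]" using assms
      by (intro image_eqI[of _ _ "(1,0)"]) (auto simp: yd2 T2_def)
    ultimately show ?thesis unfolding ssS_def two by auto
  qed
  moreover have "T1 \<noteq> T2"
  proof
    assume "T1 = T2"
    hence "T1 (0, a-1) = T2 (0, a-1)" by simp
    thus False using assms unfolding T1_def T2_def by auto
  qed
  ultimately show ?thesis by (rule card_ge2)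
qed

lemma two_rows_eq:
  assumes "a \<ge> 2"
  shows "1 \<le> card (ssS [a,a] {1..3})"
proof -
  define T where "T = (\<lambda>(i::nat,j). if (i = 0 \<and> j < a) \<or> (i = 1 \<and> j < a) then (if i = 1 \<and> j = a - 1 then 3 else i + 1) else (0::nat))"
  have three: "{1..3::nat} = {1,2,3}" by auto
  have "T \<in> ssS [a,a] {1..3}"
  proof -
    have "shp [a,a] T" using assms unfolding shp_def yd2 T_def by auto
    moreover have "T ` young_diagram [a,a] \<subseteq> {1,2,3}" unfolding yd2 T_def by (auto split: if_splits)
    moreover have "1 \<in> T ` young_diagram [a,a]" using assms
      by (intro image_eqI[of _ _ "(0,0)"]) (auto simp: yd2 T_def)
    moreover have "2 \<in> T ` young_diagram [a,a]" using assms
      by (intro image_eqI[of _ _ "(1,0)"]) (auto simp: yd2 T_def)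
    moreover have "3 \<in> T ` young_diagram [a,a]" using assms
      by (intro image_eqI[of _ _ "(1,a-1)"]) (auto simp: yd2 T_def)
    ultimately show ?thesis unfolding ssS_def three by auto
  qed
  thus ?thesis by (rule card_ge1)
qed


theorem lemma4p4:
  fixes lam :: "nat list" and k :: nat
  assumes "is_partition lam"
    and "k \<ge> 3"
    and "1 \<le> part_length lam" and "part_length lam \<le> k - 2"
    and "lam \<noteq> [1]" and "lam \<noteq> [2]" and "lam \<noteq> [1, 1]"
  shows "real (schur_ones lam k) / real k \<ge> real (schur_ones lam (k - 1)) / real (k - 1) + 1"
proof -
  define e where "e j = card (ssS lam {1..j})" for j
  have A: "\<And>m. schur_ones lam m = (\<Sum>j\<le>m. (m choose j) * e j)"
    unfolding e_def by (rule schur_sum)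
  have srt: "sorted_wrt (\<ge>) lam" and pos: "\<forall>x\<in>set lam. 0 < x"
    using assms(1) unfolding is_partition_def by auto
  have len: "part_length lam = length lam"
    unfolding part_length_def using pos by (simp add: filter_id_conv)
  have ne: "lam \<noteq> []" using assms(3) len by auto
  have D0: "(0,0) \<in> young_diagram lam"
    using ne pos unfolding young_diagram_def by (cases lam) auto
  have e0: "e 0 = 0"
  proof -
    have "ssS lam {1..0} = {}"
    proof (rule ccontr)
      assume "ssS lam {1..0} \<noteq> {}"
      then obtain T where "T \<in> ssS lam {1..0}" by blast
      hence "T ` young_diagram lam = {}" unfolding ssS_def by simp
      thus False using D0 by blast
    qed
    thus ?thesis unfolding e_def by simp
  qed
  have k: "k \<ge> 3" by (rule assms(2))
  have cases: "e 2 \<ge> 2 \<or> (e 2 \<ge> 1 \<and> e 3 \<ge> 1 \<and> k \<ge> 4) \<or> (\<exists>l. 3 \<le> l \<and> l \<le> k - 2 \<and> e l \<ge> 1)"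
  proof (cases "length lam \<ge> 3")
    case True
    have "e (length lam) \<ge> 1" unfolding e_def by (rule card_ge1[OF R_mem[OF assms(1)]])
    thus ?thesis using True assms(4) len by auto
  next
    case False
    moreover have "length lam > 0" using ne by simp
    ultimately have "length lam = 1 \<or> length lam = 2" by presburger
    thus ?thesis
    proof
      assume l1: "length lam = 1"
      then obtain a where a: "lam = [a]" by (cases lam) auto
      have "a \<ge> 3" using a pos assms(5,6) by auto
      hence "e 2 \<ge> 2" unfolding e_def a by (rule one_row)
      thus ?thesis by simp
    next
      assume l2: "length lam = 2"
      then obtain a b where ab: "lam = [a,b]"
        by (metis length_0_conv length_Suc_conv numeral_2_eq_2)
      have b1: "b \<ge> 1" using ab pos by auto
      have ba: "b \<le> a" using srt ab by auto
      show ?thesis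
      proof (cases "b < a")
        case True
        hence "e 2 \<ge> 2" unfolding e_def ab using b1 by (intro two_rows_gt) auto
        thus ?thesis by simp
      next
        case False
        hence aa: "a = b" using ba by simp
        hence a2: "a \<ge> 2" using b1 assms(7) ab by (cases "a = 1") auto
        have "e 3 \<ge> 1" unfolding e_def ab aa using a2 aa by (intro two_rows_eq) auto
        moreover have "e 2 \<ge> 1" using card_ge1[OF R_mem[OF assms(1)]] l2 unfolding e_def by simp
        moreover have "k \<ge> 4" using assms(4) len l2 k by simp
        ultimately show ?thesis by simp
      qed
    qed
  qed
  have "(\<Sum>j\<le>k. real (e j) * dd k j) \<ge> 1" by (rule bound[OF k e0 cases])
  hence "real (schur_ones lam k) / real k - real (schur_ones lam (k - 1)) / real (k - 1) \<ge> 1"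
    unfolding A using key_sum[OF k, of e] by simp
  thus ?thesis by simp
qed

end
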